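(* Let $a,b\in\mathbb{Z}^+$ with $a$ odd. For every $n\in\mathbb{Z}^+$, $$t(a,3a,4b;4n+6a)=2t(a,12a,b;n),\qquad t(a,3a,4b;4n+3a)=2t(3a,4a,b;n).$$ Moreover, for all complex $q$ with $|q|<1$, $$\sum_{n=0}^{\infty}t(a,3a,4b;4n)q^n=8\varphi(q^{6a})\psi(q^a)\psi(q^b),\qquad \sum_{n=0}^{\infty}t(a,3a,4b;4n+a)q^n=8\varphi(q^{2a})\psi(q^{3a})\psi(q^b).$$
   Context: $\mathbb{Z}^+$ is the set of positive integers. For $a,b,c\in\mathbb{Z}^+$ and nonnegative integer $n$, $t(a,b,c;n)$ denotes the number of triples $(x,y,z)\in\mathbb{Z}^3$ with $n=a\frac{x(x+1)}2+b\frac{y(y+1)}2+c\frac{z(z+1)}2$. Ramanujan's theta functions are $\varphi(q)=\sum_{n=-\infty}^{\infty}q^{n^2}$ and $\psi(q)=\sum_{n=0}^{\infty}q^{n(n+1)/2}$ for $|q|<1$. *)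

theory Defs
  imports "HOL-Analysis.Analysis"
begin

definition tri :: "int \<Rightarrow> int" where
  "tri x = x * (x + 1) div 2"

definition tcount :: "nat \<Rightarrow> nat \<Rightarrow> nat \<Rightarrow> nat \<Rightarrow> nat" where
  "tcount a b c n = card {(x::int, y::int, z::int).
      int n = int a * tri x + int b * tri y + int c * tri z}"

definition rphi :: "complex \<Rightarrow> complex" where
  "rphi q = (\<Sum>\<^sub>\<infinity>n::int. q ^ nat (n^2))"

definition rpsi :: "complex \<Rightarrow> complex" where
  "rpsi q = (\<Sum>n. q ^ (n * (n + 1) div 2))"

end

theory Submission
  imports Defs
begin


lemma tri2: "2 * tri x = x * (x + 1)"
proof -
  have "even (x * (x + 1))" by simp
  then show ?thesis unfolding tri_def by simp
qed

lemma tri_nonneg: "tri x \<ge> 0"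
proof -
  have "x * (x + 1) \<ge> 0"
    by (cases "x \<ge> 0") (auto simp: mult_nonneg_nonneg mult_nonpos_nonpos)
  with tri2[of x] show ?thesis by linarith
qed

lemma tri_neg: "tri (-1 - x) = tri x"
proof -
  have "2 * tri (-1 - x) = 2 * tri x" unfolding tri2 by (simp add: algebra_simps)
  then show ?thesis by simp
qed

lemma tri_mod: "tri x mod 4 = tri (x mod 8) mod 4"
proof -
  define q r where "q = x div 8" and "r = x mod 8"
  have x: "x = 8 * q + r" unfolding q_def r_def by simp
  have "2 * tri x = 2 * (tri r + 4 * (8*q*q + 2*q*r + q))"
    unfolding x tri2 distrib_left by (simp add: tri2 algebra_simps)
  then have "tri x = tri r + 4 * (8*q*q + 2*q*r + q)" by simp
  then have "tri x mod 4 = (tri r + 4 * (8*q*q + 2*q*r + q)) mod 4" by simp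
  also have "\<dots> = tri r mod 4" by (rule mod_mult_self2)
  finally have "tri x mod 4 = tri r mod 4" .
  then show ?thesis unfolding r_def by simp
qed

lemma modshift: fixes A B m :: int assumes "m dvd 8" shows "(A + 8*B) mod m = A mod m"
proof -
  obtain c where c: "8 = m * c" using assms by blast
  have "A + 8*B = A + (c*B) * m" unfolding c by (simp add: algebra_simps)
  then show ?thesis by (metis mod_mult_self1)
qed
lemma mod8_facts: fixes x y :: int shows
 "(x + 3*y) mod 4 = (x mod 8 + 3*(y mod 8)) mod 4"
 "(x - y) mod 8 = (x mod 8 - y mod 8) mod 8"
 "(x - y) mod 4 = (x mod 8 - y mod 8) mod 4"
 "(x + 3*y) mod 8 = (x mod 8 + 3*(y mod 8)) mod 8"
 "(x + 3*y + 2) mod 8 = (x mod 8 + 3*(y mod 8) + 2) mod 8"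
 "even (x - y) = even (x mod 8 - y mod 8)"
proof -
  have r: "x mod 8 = x + 8 * (- (x div 8))" and s: "y mod 8 = y + 8 * (- (y div 8))"
    by (simp_all add: minus_div_mult_eq_mod[symmetric])
  show "(x + 3*y) mod 4 = (x mod 8 + 3*(y mod 8)) mod 4"
    unfolding r s using modshift[of 4 "x + 3*y" "- (x div 8) - 3 * (y div 8)"] by (simp add: algebra_simps)
  show "(x - y) mod 8 = (x mod 8 - y mod 8) mod 8"
    unfolding r s using modshift[of 8 "x - y" "- (x div 8) + (y div 8)"] by (simp add: algebra_simps)
  show "(x - y) mod 4 = (x mod 8 - y mod 8) mod 4"
    unfolding r s using modshift[of 4 "x - y" "- (x div 8) + (y div 8)"] by (simp add: algebra_simps)
  show "(x + 3*y) mod 8 = (x mod 8 + 3*(y mod 8)) mod 8"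
    unfolding r s using modshift[of 8 "x + 3*y" "- (x div 8) - 3 * (y div 8)"] by (simp add: algebra_simps)
  show "(x + 3*y + 2) mod 8 = (x mod 8 + 3*(y mod 8) + 2) mod 8"
    unfolding r s using modshift[of 8 "x + 3*y + 2" "- (x div 8) - 3 * (y div 8)"] by (simp add: algebra_simps)
  show "even (x - y) = even (x mod 8 - y mod 8)"
    unfolding r s by (simp add: algebra_simps)
qed

lemma cong_key:
  fixes x y :: int
  assumes "even (x - y)"
  shows "((tri x + 3 * tri y) mod 4 = 0 \<longrightarrow> (x + 3*y) mod 4 = 0 \<and> (x - y) mod 8 = 0) \<and>
         ((tri x + 3 * tri y) mod 4 = 2 \<longrightarrow> (x + 3*y) mod 4 = 0 \<and> (x - y) mod 8 = 4) \<and>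
         ((tri x + 3 * tri y) mod 4 = 3 \<longrightarrow> (x - y) mod 4 = 2 \<and> (x + 3*y) mod 8 = 2) \<and>
         ((tri x + 3 * tri y) mod 4 = 1 \<longrightarrow> (x - y) mod 4 = 2 \<and> (x + 3*y + 2) mod 8 = 0)"
proof -
  define r s where "r = x mod 8" and "s = y mod 8"
  have V: "(tri x + 3 * tri y) mod 4 = (tri r + 3 * tri s) mod 4"
    unfolding r_def s_def by (metis mod_add_cong mod_mult_right_eq tri_mod)
  have r: "r \<in> {0..7}" and s: "s \<in> {0..7}" unfolding r_def s_def by auto
  note e1 = mod8_facts[of x y, folded r_def s_def]
  have rr: "r = 0 \<or> r = 1 \<or> r = 2 \<or> r = 3 \<or> r = 4 \<or> r = 5 \<or> r = 6 \<or> r = 7" using r by auto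
  have ss: "s = 0 \<or> s = 1 \<or> s = 2 \<or> s = 3 \<or> s = 4 \<or> s = 5 \<or> s = 6 \<or> s = 7" using s by auto
  have ev: "even (r - s)" using assms e1(6) by simp
  show ?thesis unfolding V e1(1-5)
    using rr ss ev
    by (elim disjE; simp add: tri_def)
qed

lemma card_double:
  assumes "S = A \<union> B" "A \<inter> B = {}" "bij_betw f A B"
  shows "card S = 2 * card A"
proof (cases "finite A")
  case True
  have fB: "finite B" using bij_betw_finite[OF assms(3)] True by simp
  have "card S = card A + card B" unfolding assms(1) by (rule card_Un_disjoint[OF True fB assms(2)])
  moreover have "card A = card B" by (rule bij_betw_same_card[OF assms(3)])
  ultimately show ?thesis by simp
next
  case False
  have "infinite S" using False unfolding assms(1) by simp
  then show ?thesis using False by simp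
qed

lemma div4: assumes "odd a" "(4::int) dvd int a * k" shows "4 dvd k"
proof -
  have "coprime (4::int) (int a)"
    using assms(1) coprime_power_left_iff[of "2::int" 2 "int a"] by simp
  then show ?thesis using assms(2) coprime_dvd_mult_right_iff by blast
qed



lemma comb_generic:
  fixes a b n c :: nat and G H :: "int \<Rightarrow> int \<Rightarrow> int \<times> int" and W :: "int \<Rightarrow> int \<Rightarrow> int"
  assumes odd: "odd a"
  and iden: "\<And>u v. tri (fst (G u v)) + 3 * tri (snd (G u v)) = 4 * W u v + int c"
  and par: "\<And>u v. even (fst (G u v) - snd (G u v))"
  and HG: "\<And>u v. H (fst (G u v)) (snd (G u v)) = (u, v)"
  and GH: "\<And>x y. even (x - y) \<Longrightarrow> (tri x + 3*tri y) mod 4 = int c mod 4 \<Longrightarrow> G (fst (H x y)) (snd (H x y)) = (x, y)"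
  shows "tcount a (3*a) (4*b) (4*n + c*a) = 2 * card {(u,v,z). int n = int a * W u v + int b * tri z}"
proof -
  define S where "S = {(x::int, y::int, z::int). int (4*n + c*a) = int a * tri x + int (3*a) * tri y + int (4*b) * tri z}"
  define A where "A = {p \<in> S. even (fst p - fst (snd p))}"
  define B where "B = {p \<in> S. odd (fst p - fst (snd p))}"
  define T where "T = {(u,v,z). int n = int a * W u v + int b * tri z}"
  define f where "f = (\<lambda>(x::int, y::int, z::int). (x, -1 - y, z))"
  define gg where "gg = (\<lambda>(u, v, z::int). (fst (G u v), snd (G u v), z))"
  define hh where "hh = (\<lambda>(x, y, z::int). (fst (H x y), snd (H x y), z))"
  have memS: "(x, y, z) \<in> S \<longleftrightarrow> int (4*n + c*a) = int a * tri x + int (3*a) * tri y + int (4*b) * tri z" for x y z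
    unfolding S_def by simp
  have t: "tcount a (3*a) (4*b) (4*n + c*a) = card S" unfolding tcount_def S_def by simp
  have SAB: "S = A \<union> B" "A \<inter> B = {}" unfolding A_def B_def by auto
  have par2: "odd (x - (-1 - y)) \<longleftrightarrow> even (x - y)" for x y :: int
    by presburger
  have fbij: "bij_betw f A B"
  proof (rule bij_betw_byWitness[where f' = f])
    show "\<forall>p\<in>A. f (f p) = p" unfolding f_def by auto
    show "\<forall>p\<in>B. f (f p) = p" unfolding f_def by auto
    show "f ` A \<subseteq> B" unfolding f_def A_def B_def using par2 by (auto simp: memS tri_neg)
    show "f ` B \<subseteq> A" unfolding f_def A_def B_def using par2 by (auto simp: memS tri_neg)
  qed
  have modc: "(tri x + 3*tri y) mod 4 = int c mod 4" if "(x, y, z) \<in> S" for x y z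
  proof -
    have "int a * (tri x + 3*tri y - int c) = 4 * (int n - int b * tri z)"
      using that unfolding memS by (simp add: algebra_simps)
    then have "4 dvd int a * (tri x + 3*tri y - int c)" by simp
    then have "4 dvd (tri x + 3*tri y - int c)" using div4[OF odd] by blast
    then show ?thesis by (simp add: mod_eq_dvd_iff)
  qed
  have gbij: "bij_betw gg T A"
  proof (rule bij_betw_byWitness[where f' = hh])
    show "\<forall>p\<in>T. hh (gg p) = p" unfolding gg_def hh_def by (auto simp: HG)
    have GH': "gg (hh (x, y, z)) = (x, y, z)" if "(x, y, z) \<in> A" for x y z
    proof -
      have "even (x - y)" "(x, y, z) \<in> S" using that unfolding A_def by auto
      then have "G (fst (H x y)) (snd (H x y)) = (x, y)" using GH modc by blast
      then show ?thesis unfolding gg_def hh_def by simp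
    qed
    then show "\<forall>p\<in>A. gg (hh p) = p" by auto
    have "gg (u, v, z) \<in> A" if "(u, v, z) \<in> T" for u v z
    proof -
      have e: "int n = int a * W u v + int b * tri z" using that unfolding T_def by simp
      have "int (4*n + c*a) = int a * (tri (fst (G u v)) + 3 * tri (snd (G u v))) + int (4*b) * tri z"
        unfolding iden using e by (simp add: algebra_simps)
      then have "(fst (G u v), snd (G u v), z) \<in> S" unfolding memS by (simp add: algebra_simps)
      then show ?thesis unfolding A_def gg_def using par by simp
    qed
    then show "gg ` T \<subseteq> A" by auto
    have "hh (x, y, z) \<in> T" if "(x, y, z) \<in> A" for x y z
    proof -
      define u v where "u = fst (H x y)" and "v = snd (H x y)"
      have "gg (u, v, z) = (x, y, z)" using GH'[OF that] unfolding u_def v_def hh_def by simp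
      then have xy: "fst (G u v) = x" "snd (G u v) = y" unfolding gg_def by auto
      have "(x, y, z) \<in> S" using that unfolding A_def by auto
      then have "int (4*n + c*a) = int a * (tri x + 3 * tri y) + int (4*b) * tri z"
        unfolding memS by (simp add: algebra_simps)
      also have "tri x + 3 * tri y = 4 * W u v + int c" using iden[of u v] unfolding xy .
      finally have "int n = int a * W u v + int b * tri z" by (simp add: algebra_simps)
      then show ?thesis unfolding T_def hh_def u_def v_def by simp
    qed
    then show "hh ` A \<subseteq> T" by auto
  qed
  have "card S = 2 * card A" using card_double[OF SAB fbij] .
  also have "card A = card T" using bij_betw_same_card[OF gbij] by simp
  finally show ?thesis unfolding t T_def .
qed

lemma tri_real: "real_of_int (tri x) = real_of_int x * (real_of_int x + 1) / 2"
proof -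
  have "real_of_int (2 * tri x) = real_of_int (x * (x + 1))" by (simp only: tri2)
  then show ?thesis by simp
qed

lemma idA: "tri (u + 6* v + 3) + 3 * tri (u - 2* v - 1) = 4 * (tri u + 12 * tri v) + int 6"
proof -
  have "real_of_int (tri (u + 6* v + 3) + 3 * tri (u - 2* v - 1)) = real_of_int (4 * (tri u + 12 * tri v) + int 6)"
    by (simp add: tri_real field_simps)
  then show ?thesis by linarith
qed
lemma idB: "tri (3* u + 2* v + 2) + 3 * tri (2* v - u) = 4 * (3 * tri u + 4 * tri v) + int 3"
proof -
  have "real_of_int (tri (3* u + 2* v + 2) + 3 * tri (2* v - u)) = real_of_int (4 * (3 * tri u + 4 * tri v) + int 3)"
    by (simp add: tri_real field_simps)
  then show ?thesis by linarith
qed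
lemma idC: "tri (u + 6* m) + 3 * tri (u - 2* m) = 4 * (6 * m^2 + tri u) + int 0"
proof -
  have "real_of_int (tri (u + 6* m) + 3 * tri (u - 2* m)) = real_of_int (4 * (6 * m^2 + tri u) + int 0)"
    by (simp add: tri_real field_simps) (simp add: algebra_simps power2_eq_square)
  then show ?thesis by linarith
qed
lemma idD: "tri (2* m + 3* v + 1) + 3 * tri (2* m - v - 1) = 4 * (2 * m^2 + 3 * tri v) + int 1"
proof -
  have "real_of_int (tri (2* m + 3* v + 1) + 3 * tri (2* m - v - 1)) = real_of_int (4 * (2 * m^2 + 3 * tri v) + int 1)"
    by (simp add: tri_real field_simps) (simp add: algebra_simps power2_eq_square)
  then show ?thesis by linarith
qed

lemma divmod_eq: "(b::int) * (a div b) + a mod b = a" by (rule mult_div_mod_eq)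

lemma caseA: assumes "odd a" shows "tcount a (3*a) (4*b) (4*n + 6*a) = 2 * tcount a (12*a) b n"
proof -
  have "tcount a (3*a) (4*b) (4*n + 6*a) = 2 * card {(u,v,z). int n = int a * (tri u + 12 * tri v) + int b * tri z}"
  proof (rule comb_generic[where G = "\<lambda>u v. (u + 6 * v + 3, u - 2 * v - 1)" and H = "\<lambda>x y. ((x + 3 * y) div 4, (x - y) div 8)"
        and W = "\<lambda>u v. tri u + 12 * tri v" and c = 6])
    show "odd a" by fact
    show "tri (fst (u + 6 * v + 3, u - 2 * v - 1)) + 3 * tri (snd (u + 6 * v + 3, u - 2 * v - 1)) = 4 * (tri u + 12 * tri v) + int 6" for u v :: int
      using idA by simp
    show "even (fst (u + 6 * v + 3, u - 2 * v - 1) - snd (u + 6 * v + 3, u - 2 * v - 1))" for u v :: int by simp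
    show "(\<lambda>x y. ((x + 3 * y) div 4, (x - y) div 8)) (fst (u + 6 * v + 3, u - 2 * v - 1)) (snd (u + 6 * v + 3, u - 2 * v - 1)) = (u, v)" for u v :: int
      by simp
    fix x y :: int
    assume "even (x - y)" "(tri x + 3 * tri y) mod 4 = int 6 mod 4"
    then have m: "(x + 3 * y) mod 4 = 0" "(x - y) mod 8 = 4" using cong_key[of x y] by simp_all
    define k l where "k = (x + 3 * y) div 4" and "l = (x - y) div 8"
    have e1: "4 * k + (x + 3 * y) mod 4 = x + 3 * y" unfolding k_def by (rule divmod_eq)
    have e2: "8 * l + (x - y) mod 8 = x - y" unfolding l_def by (rule divmod_eq)
    have "k + 6 * l + 3 = x" "k - 2 * l - 1 = y" using e1 e2 m by linarith+
    then show "(\<lambda>u v. (u + 6 * v + 3, u - 2 * v - 1)) (fst ((\<lambda>x y. ((x + 3 * y) div 4, (x - y) div 8)) x y)) (snd ((\<lambda>x y. ((x + 3 * y) div 4, (x - y) div 8)) x y)) = (x, y)"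
      unfolding k_def l_def by simp
  qed
  also have "{(u,v,z). int n = int a * (tri u + 12 * tri v) + int b * tri z} = {(x, y, z). int n = int a * tri x + int (12 * a) * tri y + int b * tri z}"
    by (auto simp: algebra_simps)
  finally show ?thesis unfolding tcount_def .
qed

lemma caseB: assumes "odd a" shows "tcount a (3*a) (4*b) (4*n + 3*a) = 2 * tcount (3*a) (4*a) b n"
proof -
  have "tcount a (3*a) (4*b) (4*n + 3*a) = 2 * card {(u,v,z). int n = int a * (3 * tri u + 4 * tri v) + int b * tri z}"
  proof (rule comb_generic[where G = "\<lambda>u v. (3 * u + 2 * v + 2, 2 * v - u)" and H = "\<lambda>x y. ((x - y) div 4, (x + 3 * y) div 8)"
        and W = "\<lambda>u v. 3 * tri u + 4 * tri v" and c = 3])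
    show "odd a" by fact
    show "tri (fst (3 * u + 2 * v + 2, 2 * v - u)) + 3 * tri (snd (3 * u + 2 * v + 2, 2 * v - u)) = 4 * (3 * tri u + 4 * tri v) + int 3" for u v :: int
      using idB by simp
    show "even (fst (3 * u + 2 * v + 2, 2 * v - u) - snd (3 * u + 2 * v + 2, 2 * v - u))" for u v :: int by simp
    show "(\<lambda>x y. ((x - y) div 4, (x + 3 * y) div 8)) (fst (3 * u + 2 * v + 2, 2 * v - u)) (snd (3 * u + 2 * v + 2, 2 * v - u)) = (u, v)" for u v :: int
      by simp
    fix x y :: int
    assume "even (x - y)" "(tri x + 3 * tri y) mod 4 = int 3 mod 4"
    then have m: "(x - y) mod 4 = 2" "(x + 3 * y) mod 8 = 2" using cong_key[of x y] by simp_all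
    define k l where "k = (x - y) div 4" and "l = (x + 3 * y) div 8"
    have e1: "4 * k + (x - y) mod 4 = x - y" unfolding k_def by (rule divmod_eq)
    have e2: "8 * l + (x + 3 * y) mod 8 = x + 3 * y" unfolding l_def by (rule divmod_eq)
    have "3 * k + 2 * l + 2 = x" "2 * l - k = y" using e1 e2 m by linarith+
    then show "(\<lambda>u v. (3 * u + 2 * v + 2, 2 * v - u)) (fst ((\<lambda>x y. ((x - y) div 4, (x + 3 * y) div 8)) x y)) (snd ((\<lambda>x y. ((x - y) div 4, (x + 3 * y) div 8)) x y)) = (x, y)"
      unfolding k_def l_def by simp
  qed
  also have "{(u,v,z). int n = int a * (3 * tri u + 4 * tri v) + int b * tri z} = {(x, y, z). int n = int (3 * a) * tri x + int (4 * a) * tri y + int b * tri z}"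
    by (auto simp: algebra_simps)
  finally show ?thesis unfolding tcount_def .
qed

lemma caseC: assumes "odd a" shows "tcount a (3*a) (4*b) (4*n) = 2 * card {(m,u,z). int n = int a * (6 * m^2 + tri u) + int b * tri z}"
proof -
  have "tcount a (3*a) (4*b) (4*n + 0*a) = 2 * card {(m,u,z). int n = int a * (6 * m^2 + tri u) + int b * tri z}"
  proof (rule comb_generic[where G = "\<lambda>m u. (u + 6 * m, u - 2 * m)" and H = "\<lambda>x y. ((x - y) div 8, (x + 3 * y) div 4)"
        and W = "\<lambda>m u. 6 * m^2 + tri u" and c = 0])
    show "odd a" by fact
    show "tri (fst (u + 6 * m, u - 2 * m)) + 3 * tri (snd (u + 6 * m, u - 2 * m)) = 4 * (6 * m^2 + tri u) + int 0" for m u :: int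
      using idC by simp
    show "even (fst (u + 6 * m, u - 2 * m) - snd (u + 6 * m, u - 2 * m))" for m u :: int by simp
    show "(\<lambda>x y. ((x - y) div 8, (x + 3 * y) div 4)) (fst (u + 6 * m, u - 2 * m)) (snd (u + 6 * m, u - 2 * m)) = (m, u)" for m u :: int
      by simp
    fix x y :: int
    assume "even (x - y)" "(tri x + 3 * tri y) mod 4 = int 0 mod 4"
    then have m: "(x + 3 * y) mod 4 = 0" "(x - y) mod 8 = 0" using cong_key[of x y] by simp_all
    define k l where "k = (x - y) div 8" and "l = (x + 3 * y) div 4"
    have e1: "8 * k + (x - y) mod 8 = x - y" unfolding k_def by (rule divmod_eq)
    have e2: "4 * l + (x + 3 * y) mod 4 = x + 3 * y" unfolding l_def by (rule divmod_eq)
    have "l + 6 * k = x" "l - 2 * k = y" using e1 e2 m by linarith+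
    then show "(\<lambda>m u. (u + 6 * m, u - 2 * m)) (fst ((\<lambda>x y. ((x - y) div 8, (x + 3 * y) div 4)) x y)) (snd ((\<lambda>x y. ((x - y) div 8, (x + 3 * y) div 4)) x y)) = (x, y)"
      unfolding k_def l_def by simp
  qed
  then show ?thesis by simp
qed

lemma caseD: assumes "odd a" shows "tcount a (3*a) (4*b) (4*n + a) = 2 * card {(m,v,z). int n = int a * (2 * m^2 + 3 * tri v) + int b * tri z}"
proof -
  have "tcount a (3*a) (4*b) (4*n + 1*a) = 2 * card {(m,v,z). int n = int a * (2 * m^2 + 3 * tri v) + int b * tri z}"
  proof (rule comb_generic[where G = "\<lambda>m v. (2 * m + 3 * v + 1, 2 * m - v - 1)" and H = "\<lambda>x y. ((x + 3 * y + 2) div 8, (x - y) div 4)"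
        and W = "\<lambda>m v. 2 * m^2 + 3 * tri v" and c = 1])
    show "odd a" by fact
    show "tri (fst (2 * m + 3 * v + 1, 2 * m - v - 1)) + 3 * tri (snd (2 * m + 3 * v + 1, 2 * m - v - 1)) = 4 * (2 * m^2 + 3 * tri v) + int 1" for m v :: int
      using idD by simp
    show "even (fst (2 * m + 3 * v + 1, 2 * m - v - 1) - snd (2 * m + 3 * v + 1, 2 * m - v - 1))" for m v :: int by simp
    show "(\<lambda>x y. ((x + 3 * y + 2) div 8, (x - y) div 4)) (fst (2 * m + 3 * v + 1, 2 * m - v - 1)) (snd (2 * m + 3 * v + 1, 2 * m - v - 1)) = (m, v)" for m v :: int
      by simp
    fix x y :: int
    assume "even (x - y)" "(tri x + 3 * tri y) mod 4 = int 1 mod 4"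
    then have m: "(x - y) mod 4 = 2" "(x + 3 * y + 2) mod 8 = 0" using cong_key[of x y] by simp_all
    define k l where "k = (x + 3 * y + 2) div 8" and "l = (x - y) div 4"
    have e1: "8 * k + (x + 3 * y + 2) mod 8 = x + 3 * y + 2" unfolding k_def by (rule divmod_eq)
    have e2: "4 * l + (x - y) mod 4 = x - y" unfolding l_def by (rule divmod_eq)
    have "2 * k + 3 * l + 1 = x" "2 * k - l - 1 = y" using e1 e2 m by linarith+
    then show "(\<lambda>m v. (2 * m + 3 * v + 1, 2 * m - v - 1)) (fst ((\<lambda>x y. ((x + 3 * y + 2) div 8, (x - y) div 4)) x y)) (snd ((\<lambda>x y. ((x + 3 * y + 2) div 8, (x - y) div 4)) x y)) = (x, y)"
      unfolding k_def l_def by simp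
  qed
  then show ?thesis by simp
qed



lemma geom_norm_summable:
  fixes w :: complex and g :: "nat \<Rightarrow> nat"
  assumes "norm w < 1" "\<And>n. g n \<ge> n"
  shows "summable (\<lambda>n. norm (w ^ g n))"
proof (rule summable_comparison_test)
  show "\<exists>N. \<forall>n\<ge>N. norm (norm (w ^ g n)) \<le> norm w ^ n"
    using assms by (auto simp: norm_power intro!: power_decreasing)
  show "summable (\<lambda>n. norm w ^ n)" using assms(1) by (simp add: summable_geometric)
qed

lemma geom_has_sum:
  fixes w :: complex and g :: "nat \<Rightarrow> nat"
  assumes "norm w < 1" "\<And>n. g n \<ge> n"
  shows "((\<lambda>n. w ^ g n) has_sum (\<Sum>n. w ^ g n)) UNIV"
proof -
  have s: "summable (\<lambda>n. norm (w ^ g n))" by (rule geom_norm_summable[OF assms])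
  then have "summable (\<lambda>n. w ^ g n)" by (rule summable_norm_cancel)
  then show ?thesis using norm_summable_imp_has_sum[OF s] summable_sums by blast
qed

lemma has_sum_int_split:
  fixes f :: "int \<Rightarrow> 'a::topological_comm_monoid_add"
  assumes "((\<lambda>n. f (int n)) has_sum A) UNIV" "((\<lambda>n. f (-1 - int n)) has_sum B) UNIV"
  shows "(f has_sum (A + B)) UNIV"
proof -
  have i1: "inj_on int UNIV" by (simp add: inj_on_def)
  have i2: "inj_on (\<lambda>n::nat. -1 - int n) UNIV" by (simp add: inj_on_def)
  have 1: "(f has_sum A) (range int)"
    using has_sum_reindex[OF i1, of f A] assms(1) by (simp add: comp_def)
  have 2: "(f has_sum B) (range (\<lambda>n::nat. -1 - int n))"
    using has_sum_reindex[OF i2, of f B] assms(2) by (simp add: comp_def)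
  have d: "range int \<inter> range (\<lambda>n::nat. -1 - int n) = {}" by auto
  have u: "range int \<union> range (\<lambda>n::nat. -1 - int n) = UNIV"
  proof -
    have "x \<in> range int \<union> range (\<lambda>n::nat. -1 - int n)" for x :: int
    proof (cases "x \<ge> 0")
      case True
      then have "x = int (nat x)" by simp
      then show ?thesis by blast
    next
      case False
      then have "x = -1 - int (nat (-1 - x))" by simp
      then show ?thesis by blast
    qed
    then show ?thesis by blast
  qed
  show ?thesis using has_sum_Un_disjoint[OF 1 2 d] unfolding u .
qed

lemma tri_int: "nat (tri (int n)) = n * (n + 1) div 2"
proof -
  have "tri (int n) = int (n * (n + 1)) div int 2" unfolding tri_def by (simp add: algebra_simps)
  also have "\<dots> = int (n * (n + 1) div 2)" by (simp only: zdiv_int)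
  finally show ?thesis by simp
qed

lemma t1: "2 * n \<le> n * (n + 1::nat)"
proof (cases "n = 0")
  case False
  then have "2 \<le> n + 1" by simp
  then have "n * 2 \<le> n * (n + 1)" by (rule mult_le_mono2)
  then show ?thesis by (simp add: mult.commute)
qed simp
lemma t2: "n * (n + 1) div 2 \<ge> (n::nat)"
proof -
  have "(2 * n) div 2 \<le> n * (n + 1) div 2" using t1 by (rule div_le_mono)
  then show ?thesis by simp
qed

lemma psi_has_sum:
  fixes w :: complex
  assumes "norm w < 1"
  shows "((\<lambda>x::int. w ^ nat (tri x)) has_sum (2 * rpsi w)) UNIV"
proof -
  have ge: "n * (n + 1) div 2 \<ge> n" for n :: nat by (rule t2)
  have h: "((\<lambda>n. w ^ (n * (n + 1) div 2)) has_sum rpsi w) UNIV"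
    unfolding rpsi_def by (rule geom_has_sum[OF assms ge])
  have h1: "((\<lambda>n. w ^ nat (tri (int n))) has_sum rpsi w) UNIV" unfolding tri_int by (rule h)
  have h2: "((\<lambda>n. w ^ nat (tri (-1 - int n))) has_sum rpsi w) UNIV" unfolding tri_neg tri_int by (rule h)
  show ?thesis unfolding mult_2 by (rule has_sum_int_split[OF h1 h2])
qed

lemma phi_has_sum:
  fixes w :: complex
  assumes "norm w < 1"
  shows "((\<lambda>x::int. w ^ nat (x^2)) has_sum rphi w) UNIV"
proof -
  have e1: "nat ((int n)^2) = n^2" for n :: nat by (simp add: nat_power_eq)
  have e2: "nat ((-1 - int n)^2) = (n + 1)^2" for n :: nat
  proof -
    have "(-1 - int n)^2 = int ((n + 1)^2)" by (simp add: power2_eq_square algebra_simps)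
    then show ?thesis by (simp only: nat_int)
  qed
  have g1: "n^2 \<ge> n" for n :: nat by (simp add: power2_eq_square)
  have g2: "(n + 1)^2 \<ge> n" for n :: nat by (simp add: power2_eq_square)
  have h1: "((\<lambda>n. w ^ nat ((int n)^2)) has_sum (\<Sum>n. w ^ (n^2))) UNIV"
    unfolding e1 using geom_has_sum[OF assms, of "\<lambda>n. n^2"] g1 by simp
  have h2: "((\<lambda>n. w ^ nat ((-1 - int n)^2)) has_sum (\<Sum>n. w ^ ((n+1)^2))) UNIV"
    unfolding e2 using geom_has_sum[OF assms, of "\<lambda>n. (n+1)^2"] g2 by simp
  have hs: "((\<lambda>x::int. w ^ nat (x^2)) has_sum ((\<Sum>n. w ^ (n^2)) + (\<Sum>n. w ^ ((n+1)^2)))) UNIV"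
    by (rule has_sum_int_split[OF h1 h2])
  then have "rphi w = (\<Sum>n. w ^ (n^2)) + (\<Sum>n. w ^ ((n+1)^2))" unfolding rphi_def by (rule infsumI)
  then show ?thesis using hs by simp
qed

lemma has_sum_mult_prod:
  fixes f :: "'a \<Rightarrow> complex" and g :: "'b \<Rightarrow> complex"
  assumes hf: "(f has_sum F) A" and hg: "(g has_sum G) B"
  shows "((\<lambda>(x, y). f x * g y) has_sum (F * G)) (A \<times> B)"
proof -
  have af: "(\<lambda>x. norm (f x)) summable_on A" using hf summable_on_iff_abs_summable_on_complex has_sum_imp_summable by blast
  have ag: "(\<lambda>x. norm (g x)) summable_on B" using hg summable_on_iff_abs_summable_on_complex has_sum_imp_summable by blast
  have "(\<lambda>p. norm ((\<lambda>(x, y). f x * g y) p)) summable_on Sigma A (\<lambda>_. B)"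
  proof (subst Infinite_Sum.abs_summable_on_Sigma_iff, intro conjI ballI)
    fix x assume "x \<in> A"
    show "(\<lambda>y. norm (case (x, y) of (x, y) \<Rightarrow> f x * g y)) summable_on B"
      using summable_on_cmult_right[OF ag, of "norm (f x)"] by (simp add: norm_mult)
  next
    have eq: "(\<Sum>\<^sub>\<infinity>y\<in>B. norm (case (x, y) of (x, y) \<Rightarrow> f x * g y)) = norm (f x) * (\<Sum>\<^sub>\<infinity>y\<in>B. norm (g y))" for x
      by (simp add: norm_mult infsum_cmult_right ag)
    have "(\<lambda>x. norm (f x) * (\<Sum>\<^sub>\<infinity>y\<in>B. norm (g y))) summable_on A"
      by (rule summable_on_cmult_left[OF af])
    moreover have "norm (norm (f x) * (\<Sum>\<^sub>\<infinity>y\<in>B. norm (g y))) = norm (f x) * (\<Sum>\<^sub>\<infinity>y\<in>B. norm (g y))" for x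
    proof -
      have "0 \<le> (\<Sum>\<^sub>\<infinity>y\<in>B. norm (g y))" by (rule infsum_nonneg) simp
      then show ?thesis by (simp add: abs_mult)
    qed
    ultimately have X: "(\<lambda>x. norm (norm (f x) * (\<Sum>\<^sub>\<infinity>y\<in>B. norm (g y)))) summable_on A" by simp
    show "(\<lambda>x. norm (\<Sum>\<^sub>\<infinity>y\<in>B. norm (case (x, y) of (x, y) \<Rightarrow> f x * g y))) summable_on A"
      unfolding eq by (rule X)
  qed
  then have "(\<lambda>(x, y). f x * g y) summable_on Sigma A (\<lambda>_. B)" by (rule abs_summable_summable)
  then obtain S where S: "((\<lambda>(x, y). f x * g y) has_sum S) (Sigma A (\<lambda>_. B))" using summable_on_def by blast
  have inner: "((\<lambda>y. (\<lambda>(x, y). f x * g y) (x, y)) has_sum (f x * G)) B" if "x \<in> A" for x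
    using has_sum_cmult_right[OF hg, of "f x"] by simp
  have "((\<lambda>x. f x * G) has_sum S) A" by (rule has_sum_Sigma'[OF S inner])
  moreover have "((\<lambda>x. f x * G) has_sum (F * G)) A" by (rule has_sum_cmult_left[OF hf])
  ultimately have "S = F * G" using has_sum_unique by blast
  then show ?thesis using S by simp
qed

lemma fiber_sums:
  fixes F :: "'a \<Rightarrow> nat" and q :: complex
  assumes hs: "((\<lambda>i. q ^ F i) has_sum S) UNIV" and fin: "\<And>n. finite {i. F i = n}"
  shows "(\<lambda>n. of_nat (card {i. F i = n}) * q ^ n) sums S"
proof -
  define h where "h = (\<lambda>i. (F i, i))"
  have inj: "inj_on h UNIV" unfolding h_def by (simp add: inj_on_def)
  have img: "h ` UNIV = Sigma UNIV (\<lambda>n. {i. F i = n})" unfolding h_def by auto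
  have "((\<lambda>(n, i). q ^ n) has_sum S) (h ` UNIV)"
    using has_sum_reindex[OF inj, of "\<lambda>(n, i). q ^ n" S] hs unfolding h_def by (simp add: comp_def)
  then have S2: "((\<lambda>(n, i). q ^ n) has_sum S) (Sigma UNIV (\<lambda>n. {i. F i = n}))" unfolding img .
  have inner: "((\<lambda>i. (\<lambda>(n, i). q ^ n) (n, i)) has_sum (of_nat (card {i. F i = n}) * q ^ n)) {i. F i = n}" for n
    using has_sum_finiteI[OF fin[of n], of "of_nat (card {i. F i = n}) * q ^ n" "\<lambda>i. q ^ n"] by simp
  have "((\<lambda>n. of_nat (card {i. F i = n}) * q ^ n) has_sum S) UNIV"
    by (rule has_sum_Sigma'[OF S2 inner])
  then show ?thesis by (rule has_sum_imp_sums)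
qed



lemma cons_nonneg: "0 \<le> (x::int) * (x + 1)"
  by (cases "x \<ge> 0") (auto simp: mult_nonneg_nonneg mult_nonpos_nonpos)

lemma abs_le_tri: "\<bar>x\<bar> \<le> tri x + 1"
proof -
  have t: "2 * tri x = x * x + x" using tri2[of x] by (simp add: algebra_simps)
  have c1: "0 \<le> x * x - x" using cons_nonneg[of "x - 1"] by (simp add: algebra_simps)
  have c2: "0 \<le> x * x + 3 * x + 2" using cons_nonneg[of "x + 1"] by (simp add: algebra_simps)
  show ?thesis using t c1 c2 by (cases "x \<ge> 0") auto
qed

lemma abs_le_sq: "\<bar>x\<bar> \<le> (x::int)^2"
proof -
  have "0 \<le> (\<bar>x\<bar> - 1) * (\<bar>x\<bar> - 1 + 1)" by (rule cons_nonneg)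
  then have "\<bar>x\<bar> \<le> \<bar>x\<bar> * \<bar>x\<bar>" by (simp add: algebra_simps)
  then show ?thesis by (simp add: power2_eq_square abs_mult_self_eq)
qed

lemma norm_pow_lt1: assumes "norm (q::complex) < 1" "k > 0" shows "norm (q ^ k) < 1"
proof -
  have "norm q ^ k \<le> norm q ^ 1" using assms by (intro power_decreasing) auto
  then show ?thesis using assms by (simp add: norm_power)
qed

lemma gen_assemble:
  fixes q :: complex and \<alpha> \<beta> \<gamma> :: nat
  assumes q: "norm q < 1" and pos: "\<alpha> > 0" "\<beta> > 0" "\<gamma> > 0"
  shows "(\<lambda>n. of_nat (card {(m,u,z). int n = int \<alpha> * m^2 + int \<beta> * tri u + int \<gamma> * tri z}) * q^n) sums
           (4 * rphi (q^\<alpha>) * rpsi (q^\<beta>) * rpsi (q^\<gamma>))"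
proof -
  have h1: "((\<lambda>x::int. (q^\<alpha>) ^ nat (x^2)) has_sum rphi (q^\<alpha>)) UNIV"
    by (rule phi_has_sum[OF norm_pow_lt1[OF q pos(1)]])
  have h2: "((\<lambda>x::int. (q^\<beta>) ^ nat (tri x)) has_sum (2 * rpsi (q^\<beta>))) UNIV"
    by (rule psi_has_sum[OF norm_pow_lt1[OF q pos(2)]])
  have h3: "((\<lambda>x::int. (q^\<gamma>) ^ nat (tri x)) has_sum (2 * rpsi (q^\<gamma>))) UNIV"
    by (rule psi_has_sum[OF norm_pow_lt1[OF q pos(3)]])
  have P: "((\<lambda>(m, p). (q^\<alpha>) ^ nat (m^2) * (\<lambda>(x, y). (q^\<beta>) ^ nat (tri x) * (q^\<gamma>) ^ nat (tri y)) p)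
           has_sum (rphi (q^\<alpha>) * (2 * rpsi (q^\<beta>) * (2 * rpsi (q^\<gamma>))))) (UNIV \<times> (UNIV \<times> UNIV))"
    by (rule has_sum_mult_prod[OF h1 has_sum_mult_prod[OF h2 h3]])
  define Fc where "Fc = (\<lambda>(m::int, u::int, z::int). \<alpha> * nat (m^2) + \<beta> * nat (tri u) + \<gamma> * nat (tri z))"
  have fe: "(\<lambda>(m, p). (q^\<alpha>) ^ nat (m^2) * (\<lambda>(x, y). (q^\<beta>) ^ nat (tri x) * (q^\<gamma>) ^ nat (tri y)) p) = (\<lambda>i. q ^ Fc i)"
    by (rule ext) (auto simp: Fc_def power_add power_mult)
  have P2: "((\<lambda>i. q ^ Fc i) has_sum (4 * rphi (q^\<alpha>) * rpsi (q^\<beta>) * rpsi (q^\<gamma>))) UNIV"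
    using P unfolding fe by (simp add: algebra_simps)
  have seteq: "{i. Fc i = n} = {(m,u,z). int n = int \<alpha> * m^2 + int \<beta> * tri u + int \<gamma> * tri z}" for n
  proof -
    have "Fc (m, u, z) = n \<longleftrightarrow> int n = int \<alpha> * m^2 + int \<beta> * tri u + int \<gamma> * tri z" for m u z
    proof -
      have "int (Fc (m, u, z)) = int \<alpha> * m^2 + int \<beta> * tri u + int \<gamma> * tri z"
        unfolding Fc_def using tri_nonneg[of u] tri_nonneg[of z] by simp
      then show ?thesis by linarith
    qed
    then show ?thesis by auto
  qed
  have fin: "finite {i. Fc i = n}" for n
  proof -
    define N where "N = int n + 1"
    have B: "m \<in> {-N..N} \<and> u \<in> {-N..N} \<and> z \<in> {-N..N}"
      if e: "int n = int \<alpha> * m^2 + int \<beta> * tri u + int \<gamma> * tri z" for m u z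
    proof -
      have a1': "1 * m^2 \<le> int \<alpha> * m^2" by (rule mult_right_mono) (use pos in auto)
      have a2': "1 * tri u \<le> int \<beta> * tri u" by (rule mult_right_mono) (use pos tri_nonneg in auto)
      have a3': "1 * tri z \<le> int \<gamma> * tri z" by (rule mult_right_mono) (use pos tri_nonneg in auto)
      have a1: "m^2 \<le> int \<alpha> * m^2" and a2: "tri u \<le> int \<beta> * tri u" and a3: "tri z \<le> int \<gamma> * tri z"
        using a1' a2' a3' by simp_all
      have "0 \<le> m^2" by simp
      moreover note tri_nonneg[of u] tri_nonneg[of z] abs_le_sq[of m] abs_le_tri[of u] abs_le_tri[of z]
      ultimately show "m \<in> {-N..N} \<and> u \<in> {-N..N} \<and> z \<in> {-N..N}"
        using e a1 a2 a3 unfolding N_def by auto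
    qed
    have "{(m,u,z). int n = int \<alpha> * m^2 + int \<beta> * tri u + int \<gamma> * tri z} \<subseteq> {-N..N} \<times> {-N..N} \<times> {-N..N}"
      using B by auto
    then show ?thesis unfolding seteq by (rule finite_subset) auto
  qed
  show ?thesis using fiber_sums[OF P2 fin] unfolding seteq .
qed

theorem lemma4p1:
  fixes a b :: nat
  assumes "a > 0" and "b > 0" and "odd a"
  shows "(\<forall>n::nat. n > 0 \<longrightarrow>
            tcount a (3*a) (4*b) (4*n + 6*a) = 2 * tcount a (12*a) b n \<and>
            tcount a (3*a) (4*b) (4*n + 3*a) = 2 * tcount (3*a) (4*a) b n) \<and>
         (\<forall>q::complex. norm q < 1 \<longrightarrow>
            (\<lambda>n. of_nat (tcount a (3*a) (4*b) (4*n)) * q ^ n) sums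
               (8 * rphi (q ^ (6*a)) * rpsi (q ^ a) * rpsi (q ^ b)) \<and>
            (\<lambda>n. of_nat (tcount a (3*a) (4*b) (4*n + a)) * q ^ n) sums
               (8 * rphi (q ^ (2*a)) * rpsi (q ^ (3*a)) * rpsi (q ^ b)))"
proof (intro conjI allI impI)
  fix n :: nat
  show "tcount a (3*a) (4*b) (4*n + 6*a) = 2 * tcount a (12*a) b n" by (rule caseA[OF assms(3)])
  show "tcount a (3*a) (4*b) (4*n + 3*a) = 2 * tcount (3*a) (4*a) b n" by (rule caseB[OF assms(3)])
next
  fix q :: complex
  assume q: "norm q < 1"
  have pa6: "6 * a > 0" and pa2: "2 * a > 0" and pa3: "3 * a > 0" using assms(1) by simp_all
  have gC: "(\<lambda>n. of_nat (card {(m,u,z). int n = int (6*a) * m^2 + int a * tri u + int b * tri z}) * q^n) sums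
           (4 * rphi (q^(6*a)) * rpsi (q^a) * rpsi (q^b))"
    by (rule gen_assemble[OF q pa6 assms(1) assms(2)])
  have seC: "{(m,u,z). int n = int (6*a) * m^2 + int a * tri u + int b * tri z} = {(m,u,z). int n = int a * (6 * m^2 + tri u) + int b * tri z}" for n
    by (auto simp: algebra_simps)
  have eC: "of_nat (tcount a (3*a) (4*b) (4*n)) * q ^ n = 2 * (of_nat (card {(m,u,z). int n = int (6*a) * m^2 + int a * tri u + int b * tri z}) * q^n)" for n
    unfolding seC caseC[OF assms(3)] by simp
  show "(\<lambda>n. of_nat (tcount a (3*a) (4*b) (4*n)) * q ^ n) sums (8 * rphi (q ^ (6*a)) * rpsi (q ^ a) * rpsi (q ^ b))"
    unfolding eC using sums_mult[OF gC, of 2] by (simp add: algebra_simps)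
  have gD: "(\<lambda>n. of_nat (card {(m,u,z). int n = int (2*a) * m^2 + int (3*a) * tri u + int b * tri z}) * q^n) sums
           (4 * rphi (q^(2*a)) * rpsi (q^(3*a)) * rpsi (q^b))"
    by (rule gen_assemble[OF q pa2 pa3 assms(2)])
  have seD: "{(m,u,z). int n = int (2*a) * m^2 + int (3*a) * tri u + int b * tri z} = {(m,v,z). int n = int a * (2 * m^2 + 3 * tri v) + int b * tri z}" for n
    by (auto simp: algebra_simps)
  have eD: "of_nat (tcount a (3*a) (4*b) (4*n + a)) * q ^ n = 2 * (of_nat (card {(m,u,z). int n = int (2*a) * m^2 + int (3*a) * tri u + int b * tri z}) * q^n)" for n
    unfolding seD caseD[OF assms(3)] by simp
  show "(\<lambda>n. of_nat (tcount a (3*a) (4*b) (4*n + a)) * q ^ n) sums (8 * rphi (q ^ (2*a)) * rpsi (q ^ (3*a)) * rpsi (q ^ b))"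
    unfolding eD using sums_mult[OF gD, of 2] by (simp add: algebra_simps)
qed

end
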